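(* Let $(G,d)$ be a $p$-uniformly convex space with constant $c>0$, $D\subset G$, $T:D\rightrightarrows G$, $y\in D$, $\tau\in(0,1)$, $T_\tau=(1-\tau)\mathrm{Id}\oplus\tau T$, and for $x_+\in T(x)$ let $x_\tau=(1-\tau)x\oplus\tau x_+$. (i) Suppose $T$ is pointwise almost nonexpansive at $y$ on $D$ with violation $\epsilon$ (so $T(y)$ and $T_\tau(y)$ are single points). If for all $x\in D$ and $x_+\in T(x)$ $$\tfrac{\tau}{1-\tau}\psi^{(p,c)}(x,y,x_\tau,T_\tau(y))\le(1-\tau)\tau\psi^{(p,c)}(x,y,x_+,T(y))-\tfrac{2-c}{2}(1-\tau)\tau\big(d(y,x_+)^p+d(x,T(y))^p\big),$$ then $T_\tau$ is pointwise a$\alpha$-fne at $y$ on $D$ with constant $\alpha=1-\tau$ and violation $\epsilon_\tau=\tau\big(2\tau+(1-\tau)c+\epsilon(\tau+\frac c2(1-\tau))-2\big)$. (ii) Suppose $T$ is pointwise a$\alpha$-fne at $y$ on $D$ with constant $\alpha\in(0,1)$ and violation $\epsilon$. If there is $\alpha_\tau\in(0,1)$ such that for all $x\in D$ and $x_+\in T(x)$ $$\tfrac{1-\alpha_\tau}{\alpha_\tau}\psi^{(p,c)}(x,y,x_\tau,T_\tau(y))\le\tau^2\tfrac{1-\alpha}{\alpha}\psi^{(p,c)}(x,y,x_+,T(y))+2(1-\tau)\tau d(x,y)^p-2(1-\tau)\tau\Delta^{(p,c)}(x,y,x_+,T(y))-\tfrac{2-c}{2}(1-\tau)\tau\big(d(y,x_+)^p+d(x,T(y))^p\big),$$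 then $T_\tau$ is pointwise a$\alpha$-fne at $y$ on $D$ with constant $\alpha_\tau$ and violation $\epsilon_\tau=\tau^2\epsilon$.
   Context: $(G,d)$ is uniquely geodesic; $(1-\tau)x\oplus\tau y$ is the point on the geodesic from $x$ to $y$ at distance $\tau d(x,y)$ from $x$; $T_\tau(x)=\{(1-\tau)x\oplus\tau x_+:x_+\in T(x)\}$. $(G,d)$ is $p$-uniformly convex ($p\in(1,\infty)$) with constant $c$ if $d(z,(1-\tau)x\oplus\tau y)^p\le(1-\tau)d(z,x)^p+\tau d(z,y)^p-\frac c2\tau(1-\tau)d(x,y)^p$ for all $\tau,x,y,z$. $\Delta^{(p,c)}(x,y,u,v)=\frac c4\big(d(x,v)^p+d(y,u)^p-d(x,u)^p-d(y,v)^p\big)$; $\psi^{(p,c)}(x,y,u,v)=\frac c2\big(d(x,u)^p+d(y,v)^p+d(u,v)^p+d(x,y)^p-d(y,u)^p-d(x,v)^p\big)$. $T$ is pointwise almost nonexpansive at $y$ on $D$ with violation $\epsilon\ge0$ if $d(x_+,y_+)^p\le(1+\epsilon)d(x,y)^p$ for all $x\in D$, $x_+\in T(x)$, $y_+\in T(y)$; pointwise almost $\alpha$-firmly nonexpansive (a$\alpha$-fne) at $y$ on $D$ with constant $\alpha\in(0,1)$ and violation $\epsilon$ if $d(x_+,y_+)^p\le(1+\epsilon)d(x,y)^p-\frac{1-\alpha}{\alpha}\psi^{(p,c)}(x,y,x_+,y_+)$ for all such $x,x_+,y_+$. Such mappings are single-valued at $y$. *)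

theory Defs
  imports "HOL-Analysis.Analysis"
begin

text \<open>The space (G,d) is the whole type 'a (a metric space), d = dist.\<close>

definition is_geodesic :: "'a::metric_space \<Rightarrow> 'a \<Rightarrow> (real \<Rightarrow> 'a) \<Rightarrow> bool" where
  "is_geodesic x y \<gamma> \<longleftrightarrow> \<gamma> 0 = x \<and> \<gamma> 1 = y \<and>
     (\<forall>s\<in>{0..1}. \<forall>t\<in>{0..1}. dist (\<gamma> s) (\<gamma> t) = \<bar>s - t\<bar> * dist x y)"

definition uniquely_geodesic :: "'a::metric_space itself \<Rightarrow> bool" where
  "uniquely_geodesic _ \<longleftrightarrow> (\<forall>x y::'a. (\<exists>\<gamma>. is_geodesic x y \<gamma>) \<and>
     (\<forall>\<gamma>1 \<gamma>2. is_geodesic x y \<gamma>1 \<and> is_geodesic x y \<gamma>2 \<longrightarrow> (\<forall>t\<in>{0..1}. \<gamma>1 t = \<gamma>2 t)))"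

text \<open>(1-tau) x \<oplus> tau y : the point of the geodesic from x to y at distance tau d(x,y) from x.\<close>
definition geo :: "'a::metric_space \<Rightarrow> 'a \<Rightarrow> real \<Rightarrow> 'a" where
  "geo x y \<tau> = (SOME \<gamma>. is_geodesic x y \<gamma>) \<tau>"

definition p_uniformly_convex :: "'a::metric_space itself \<Rightarrow> real \<Rightarrow> real \<Rightarrow> bool" where
  "p_uniformly_convex _ p c \<longleftrightarrow> 1 < p \<and>
     (\<forall>\<tau>\<in>{0..1}. \<forall>x y z::'a.
        dist z (geo x y \<tau>) powr p \<le> (1 - \<tau>) * dist z x powr p + \<tau> * dist z y powr p
          - c / 2 * \<tau> * (1 - \<tau>) * dist x y powr p)"

definition Tau :: "('a::metric_space \<Rightarrow> 'a set) \<Rightarrow> real \<Rightarrow> 'a \<Rightarrow> 'a set" where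
  "Tau T \<tau> x = {geo x xp \<tau> | xp. xp \<in> T x}"

definition Delta :: "real \<Rightarrow> real \<Rightarrow> 'a::metric_space \<Rightarrow> 'a \<Rightarrow> 'a \<Rightarrow> 'a \<Rightarrow> real" where
  "Delta p c x y u v = c / 4 * (dist x v powr p + dist y u powr p - dist x u powr p - dist y v powr p)"

definition psi :: "real \<Rightarrow> real \<Rightarrow> 'a::metric_space \<Rightarrow> 'a \<Rightarrow> 'a \<Rightarrow> 'a \<Rightarrow> real" where
  "psi p c x y u v = c / 2 * (dist x u powr p + dist y v powr p + dist u v powr p + dist x y powr p
     - dist y u powr p - dist x v powr p)"

definition pointwise_almost_ne :: "real \<Rightarrow> ('a::metric_space \<Rightarrow> 'a set) \<Rightarrow> 'a set \<Rightarrow> 'a \<Rightarrow> real \<Rightarrow> bool" where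
  "pointwise_almost_ne p T D y \<epsilon> \<longleftrightarrow>
     (\<forall>x\<in>D. \<forall>xp\<in>T x. \<forall>yp\<in>T y. dist xp yp powr p \<le> (1 + \<epsilon>) * dist x y powr p)"

definition pointwise_almost_fne ::
  "real \<Rightarrow> real \<Rightarrow> ('a::metric_space \<Rightarrow> 'a set) \<Rightarrow> 'a set \<Rightarrow> 'a \<Rightarrow> real \<Rightarrow> real \<Rightarrow> bool" where
  "pointwise_almost_fne p c T D y \<alpha> \<epsilon> \<longleftrightarrow> 0 < \<alpha> \<and> \<alpha> < 1 \<and>
     (\<forall>x\<in>D. \<forall>xp\<in>T x. \<forall>yp\<in>T y. dist xp yp powr p \<le> (1 + \<epsilon>) * dist x y powr p
         - (1 - \<alpha>) / \<alpha> * psi p c x y xp yp)"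

end

theory Submission
  imports Defs
begin

lemma key3:
  fixes x y xp yp :: "'a::metric_space" and p c \<tau> :: real
  assumes cv: "p_uniformly_convex TYPE('a) p c" and t0: "0 \<le> \<tau>" and t1: "\<tau> \<le> 1"
  shows "dist (geo x xp \<tau>) (geo y yp \<tau>) powr p \<le>
     (1-\<tau>)^2 * dist x y powr p + (1-\<tau>)*\<tau>*(dist x yp powr p + dist y xp powr p)
     + \<tau>^2 * dist xp yp powr p - c/2*\<tau>*(1-\<tau>)*(dist x xp powr p + dist y yp powr p)"
proof -
  let ?yt = "geo y yp \<tau>"
  have C: "\<And>x y z::'a. dist z (geo x y \<tau>) powr p \<le> (1 - \<tau>) * dist z x powr p + \<tau> * dist z y powr p
          - c / 2 * \<tau> * (1 - \<tau>) * dist x y powr p"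
    using cv t0 t1 unfolding p_uniformly_convex_def by auto
  have h1: "dist ?yt (geo x xp \<tau>) powr p \<le> (1 - \<tau>) * dist ?yt x powr p + \<tau> * dist ?yt xp powr p
          - c / 2 * \<tau> * (1 - \<tau>) * dist x xp powr p" by (rule C)
  have h2: "dist x ?yt powr p \<le> (1 - \<tau>) * dist x y powr p + \<tau> * dist x yp powr p
          - c / 2 * \<tau> * (1 - \<tau>) * dist y yp powr p" by (rule C)
  have h3: "dist xp ?yt powr p \<le> (1 - \<tau>) * dist xp y powr p + \<tau> * dist xp yp powr p
          - c / 2 * \<tau> * (1 - \<tau>) * dist y yp powr p" by (rule C)
  have h2': "(1-\<tau>) * dist x ?yt powr p \<le> (1-\<tau>) * ((1 - \<tau>) * dist x y powr p + \<tau> * dist x yp powr p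
          - c / 2 * \<tau> * (1 - \<tau>) * dist y yp powr p)"
    using h2 t1 by (intro mult_left_mono) auto
  have h3': "\<tau> * dist xp ?yt powr p \<le> \<tau> * ((1 - \<tau>) * dist xp y powr p + \<tau> * dist xp yp powr p
          - c / 2 * \<tau> * (1 - \<tau>) * dist y yp powr p)"
    using h3 t0 by (intro mult_left_mono) auto
  have e: "(1-\<tau>) * ((1 - \<tau>) * dist x y powr p + \<tau> * dist x yp powr p
          - c / 2 * \<tau> * (1 - \<tau>) * dist y yp powr p) + \<tau> * ((1 - \<tau>) * dist xp y powr p + \<tau> * dist xp yp powr p
          - c / 2 * \<tau> * (1 - \<tau>) * dist y yp powr p) - c / 2 * \<tau> * (1 - \<tau>) * dist x xp powr p
      = (1-\<tau>)^2 * dist x y powr p + (1-\<tau>)*\<tau>*(dist x yp powr p + dist y xp powr p)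
     + \<tau>^2 * dist xp yp powr p - c/2*\<tau>*(1-\<tau>)*(dist x xp powr p + dist y yp powr p)"
    by (simp add: dist_commute power2_eq_square field_simps)
  show ?thesis using h1 h2' h3' e by (simp add: dist_commute)
qed

theorem mainTheorem6:
  fixes p c \<tau> \<epsilon> :: real and D :: "'a::metric_space set" and T :: "'a \<Rightarrow> 'a set" and y :: 'a
  assumes "uniquely_geodesic TYPE('a)"
    and "p_uniformly_convex TYPE('a) p c" and "0 < c"
    and "y \<in> D" and "0 < \<tau>" and "\<tau> < 1" and "0 \<le> \<epsilon>"
  shows
   "(pointwise_almost_ne p T D y \<epsilon> \<and>
      (\<forall>x\<in>D. \<forall>xp\<in>T x. \<forall>yp\<in>T y.
         \<tau> / (1 - \<tau>) * psi p c x y (geo x xp \<tau>) (geo y yp \<tau>)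
           \<le> (1 - \<tau>) * \<tau> * psi p c x y xp yp
              - (2 - c) / 2 * (1 - \<tau>) * \<tau> * (dist y xp powr p + dist x yp powr p))
     \<longrightarrow> pointwise_almost_fne p c (Tau T \<tau>) D y (1 - \<tau>)
           (\<tau> * (2 * \<tau> + (1 - \<tau>) * c + \<epsilon> * (\<tau> + c / 2 * (1 - \<tau>)) - 2)))
    \<and>
    (\<forall>\<alpha> \<alpha>\<tau>. pointwise_almost_fne p c T D y \<alpha> \<epsilon> \<and> 0 < \<alpha>\<tau> \<and> \<alpha>\<tau> < 1 \<and>
      (\<forall>x\<in>D. \<forall>xp\<in>T x. \<forall>yp\<in>T y.
         (1 - \<alpha>\<tau>) / \<alpha>\<tau> * psi p c x y (geo x xp \<tau>) (geo y yp \<tau>)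
           \<le> \<tau>^2 * ((1 - \<alpha>) / \<alpha>) * psi p c x y xp yp
              + 2 * (1 - \<tau>) * \<tau> * dist x y powr p
              - 2 * (1 - \<tau>) * \<tau> * Delta p c x y xp yp
              - (2 - c) / 2 * (1 - \<tau>) * \<tau> * (dist y xp powr p + dist x yp powr p))
     \<longrightarrow> pointwise_almost_fne p c (Tau T \<tau>) D y \<alpha>\<tau> (\<tau>^2 * \<epsilon>))"
proof (intro conjI impI allI)
  assume A: "pointwise_almost_ne p T D y \<epsilon> \<and>
      (\<forall>x\<in>D. \<forall>xp\<in>T x. \<forall>yp\<in>T y.
         \<tau> / (1 - \<tau>) * psi p c x y (geo x xp \<tau>) (geo y yp \<tau>)
           \<le> (1 - \<tau>) * \<tau> * psi p c x y xp yp
              - (2 - c) / 2 * (1 - \<tau>) * \<tau> * (dist y xp powr p + dist x yp powr p))"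
  show "pointwise_almost_fne p c (Tau T \<tau>) D y (1 - \<tau>)
           (\<tau> * (2 * \<tau> + (1 - \<tau>) * c + \<epsilon> * (\<tau> + c / 2 * (1 - \<tau>)) - 2))"
    unfolding pointwise_almost_fne_def
  proof (intro conjI ballI)
    show "0 < 1 - \<tau>" "1 - \<tau> < 1" using assms by auto
    fix x xt yt assume x: "x \<in> D" and xt: "xt \<in> Tau T \<tau> x" and yt: "yt \<in> Tau T \<tau> y"
    obtain xp where xp: "xp \<in> T x" "xt = geo x xp \<tau>" using xt unfolding Tau_def by auto
    obtain yp where yp: "yp \<in> T y" "yt = geo y yp \<tau>" using yt unfolding Tau_def by auto
    have K: "dist xt yt powr p \<le>
     (1-\<tau>)^2 * dist x y powr p + (1-\<tau>)*\<tau>*(dist x yp powr p + dist y xp powr p)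
     + \<tau>^2 * dist xp yp powr p - c/2*\<tau>*(1-\<tau>)*(dist x xp powr p + dist y yp powr p)"
      using key3[OF assms(2), of \<tau> x xp y yp] assms xp yp by auto
    have H: "\<tau> / (1 - \<tau>) * psi p c x y xt yt
           \<le> (1 - \<tau>) * \<tau> * psi p c x y xp yp
              - (2 - c) / 2 * (1 - \<tau>) * \<tau> * (dist y xp powr p + dist x yp powr p)"
      using A x xp yp by auto
    have N: "dist xp yp powr p \<le> (1 + \<epsilon>) * dist x y powr p"
      using A x xp yp unfolding pointwise_almost_ne_def by auto
    have N': "(\<tau>^2 + (1-\<tau>)*\<tau>*c/2) * dist xp yp powr p \<le> (\<tau>^2 + (1-\<tau>)*\<tau>*c/2) * ((1 + \<epsilon>) * dist x y powr p)"
      using N assms by (intro mult_left_mono) auto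
    have e: "(1-\<tau>)^2 * dist x y powr p + (1-\<tau>)*\<tau>*(dist x yp powr p + dist y xp powr p)
     + \<tau>^2 * dist xp yp powr p - c/2*\<tau>*(1-\<tau>)*(dist x xp powr p + dist y yp powr p)
     + ((1 - \<tau>) * \<tau> * psi p c x y xp yp
              - (2 - c) / 2 * (1 - \<tau>) * \<tau> * (dist y xp powr p + dist x yp powr p))
     = (1-\<tau>)^2 * dist x y powr p + (\<tau>^2 + (1-\<tau>)*\<tau>*c/2) * dist xp yp powr p + (1-\<tau>)*\<tau>*c/2 * dist x y powr p"
      unfolding psi_def by (simp add: dist_commute power2_eq_square field_simps)
    have e2: "(1-\<tau>)^2 * dist x y powr p + (\<tau>^2 + (1-\<tau>)*\<tau>*c/2) * ((1 + \<epsilon>) * dist x y powr p) + (1-\<tau>)*\<tau>*c/2 * dist x y powr p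
      = (1 + \<tau> * (2 * \<tau> + (1 - \<tau>) * c + \<epsilon> * (\<tau> + c / 2 * (1 - \<tau>)) - 2)) * dist x y powr p"
      by (simp add: power2_eq_square field_simps)
    have e3: "(1 - (1 - \<tau>)) / (1 - \<tau>) = \<tau> / (1 - \<tau>)" by simp
    show "dist xt yt powr p \<le> (1 + \<tau> * (2 * \<tau> + (1 - \<tau>) * c + \<epsilon> * (\<tau> + c / 2 * (1 - \<tau>)) - 2)) * dist x y powr p
         - (1 - (1 - \<tau>)) / (1 - \<tau>) * psi p c x y xt yt"
      unfolding e3 using K H N' e e2 by linarith
  qed
next
  fix \<alpha> \<alpha>\<tau> :: real
  assume A: "pointwise_almost_fne p c T D y \<alpha> \<epsilon> \<and> 0 < \<alpha>\<tau> \<and> \<alpha>\<tau> < 1 \<and>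
      (\<forall>x\<in>D. \<forall>xp\<in>T x. \<forall>yp\<in>T y.
         (1 - \<alpha>\<tau>) / \<alpha>\<tau> * psi p c x y (geo x xp \<tau>) (geo y yp \<tau>)
           \<le> \<tau>^2 * ((1 - \<alpha>) / \<alpha>) * psi p c x y xp yp
              + 2 * (1 - \<tau>) * \<tau> * dist x y powr p
              - 2 * (1 - \<tau>) * \<tau> * Delta p c x y xp yp
              - (2 - c) / 2 * (1 - \<tau>) * \<tau> * (dist y xp powr p + dist x yp powr p))"
  show "pointwise_almost_fne p c (Tau T \<tau>) D y \<alpha>\<tau> (\<tau>^2 * \<epsilon>)"
    unfolding pointwise_almost_fne_def
  proof (intro conjI ballI)
    show "0 < \<alpha>\<tau>" "\<alpha>\<tau> < 1" using A by auto
    fix x xt yt assume x: "x \<in> D" and xt: "xt \<in> Tau T \<tau> x" and yt: "yt \<in> Tau T \<tau> y"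
    obtain xp where xp: "xp \<in> T x" "xt = geo x xp \<tau>" using xt unfolding Tau_def by auto
    obtain yp where yp: "yp \<in> T y" "yt = geo y yp \<tau>" using yt unfolding Tau_def by auto
    have K: "dist xt yt powr p \<le>
     (1-\<tau>)^2 * dist x y powr p + (1-\<tau>)*\<tau>*(dist x yp powr p + dist y xp powr p)
     + \<tau>^2 * dist xp yp powr p - c/2*\<tau>*(1-\<tau>)*(dist x xp powr p + dist y yp powr p)"
      using key3[OF assms(2), of \<tau> x xp y yp] assms xp yp by auto
    have H: "(1 - \<alpha>\<tau>) / \<alpha>\<tau> * psi p c x y xt yt
           \<le> \<tau>^2 * ((1 - \<alpha>) / \<alpha>) * psi p c x y xp yp
              + 2 * (1 - \<tau>) * \<tau> * dist x y powr p
              - 2 * (1 - \<tau>) * \<tau> * Delta p c x y xp yp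
              - (2 - c) / 2 * (1 - \<tau>) * \<tau> * (dist y xp powr p + dist x yp powr p)"
      using A x xp yp by auto
    have N: "dist xp yp powr p \<le> (1 + \<epsilon>) * dist x y powr p - (1 - \<alpha>) / \<alpha> * psi p c x y xp yp"
      using A x xp yp unfolding pointwise_almost_fne_def by auto
    have N': "\<tau>^2 * dist xp yp powr p \<le> \<tau>^2 * ((1 + \<epsilon>) * dist x y powr p - (1 - \<alpha>) / \<alpha> * psi p c x y xp yp)"
      using N by (intro mult_left_mono) auto
    have e: "(1-\<tau>)^2 * dist x y powr p + (1-\<tau>)*\<tau>*(dist x yp powr p + dist y xp powr p)
     + \<tau>^2 * ((1 + \<epsilon>) * dist x y powr p - (1 - \<alpha>) / \<alpha> * psi p c x y xp yp)
     - c/2*\<tau>*(1-\<tau>)*(dist x xp powr p + dist y yp powr p)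
     + (\<tau>^2 * ((1 - \<alpha>) / \<alpha>) * psi p c x y xp yp
              + 2 * (1 - \<tau>) * \<tau> * dist x y powr p
              - 2 * (1 - \<tau>) * \<tau> * Delta p c x y xp yp
              - (2 - c) / 2 * (1 - \<tau>) * \<tau> * (dist y xp powr p + dist x yp powr p))
     = (1 + \<tau>^2 * \<epsilon>) * dist x y powr p"
      unfolding Delta_def by (simp add: dist_commute power2_eq_square field_simps)
    show "dist xt yt powr p \<le> (1 + \<tau>^2 * \<epsilon>) * dist x y powr p
         - (1 - \<alpha>\<tau>) / \<alpha>\<tau> * psi p c x y xt yt"
      using K H N' e by linarith
  qed
qed

end
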